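(* Consider the tree model of size $L$ (described in the context) in which the root value is chosen uniformly at random in $[0,1]$, and let $\Theta$ be the number of open paths. Then $\mathbb{E}^*(\Theta)=1$ and $$\lim_{L\to\infty}\frac{\operatorname{Var}^*(\Theta)}{L}=1.$$
   Context: Tree model of size $L$: a deterministic rooted tree with levels $0,1,\ldots,L$; the root is at level $0$, and every node at level $k$ ($0\le k\le L-1$) has exactly $L-k$ children at level $k+1$, so there are $L!$ leaves and $L!$ root-to-leaf paths. Every leaf carries the value $1$; the root carries a value $x\in[0,1]$; every other node carries an independent uniform random value on $[0,1]$. A root-to-leaf path is open if the values along it form a strictly increasing sequence; $\Theta$ is the number of open paths. $\mathbb{E}^*$ and $\operatorname{Var}^*$ denote expectation and variance when the root value is itself uniform on $[0,1]$ and independent of the other values. *)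

theory Defs
  imports "HOL-Probability.Probability"
begin

text \<open>A node at level k is identified with the list
  [c_1,...,c_k] of child indices chosen from the root, where the child index
  at depth j (0-based) satisfies c < L - j (a node at level j has L - j children).
  The root is the empty list; leaves are the lists of length L.\<close>

definition tree_node :: "nat \<Rightarrow> nat list \<Rightarrow> bool" where
  "tree_node L xs \<longleftrightarrow> length xs \<le> L \<and> (\<forall>j<length xs. xs ! j < L - j)"

definition random_nodes :: "nat \<Rightarrow> nat list set" where
  "random_nodes L = {xs. tree_node L xs \<and> length xs < L}"

text \<open>Root-to-leaf paths, identified with the leaves.\<close>
definition tree_paths :: "nat \<Rightarrow> nat list set" where
  "tree_paths L = {xs. tree_node L xs \<and> length xs = L}"

definition tree_space :: "nat \<Rightarrow> (nat list \<Rightarrow> real) measure" where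
  "tree_space L = PiM (random_nodes L) (\<lambda>_. uniform_measure lborel {0..1::real})"

definition node_value :: "nat \<Rightarrow> (nat list \<Rightarrow> real) \<Rightarrow> nat list \<Rightarrow> real" where
  "node_value L \<omega> xs = (if length xs = L then 1 else \<omega> xs)"

definition open_path :: "nat \<Rightarrow> (nat list \<Rightarrow> real) \<Rightarrow> nat list \<Rightarrow> bool" where
  "open_path L \<omega> xs \<longleftrightarrow>
     (\<forall>k<L. node_value L \<omega> (take k xs) < node_value L \<omega> (take (Suc k) xs))"

definition Theta :: "nat \<Rightarrow> (nat list \<Rightarrow> real) \<Rightarrow> real" where
  "Theta L \<omega> = real (card {xs \<in> tree_paths L. open_path L \<omega> xs})"

definition Var_star :: "nat \<Rightarrow> real" where
  "Var_star L = (\<integral>\<omega>. (Theta L \<omega> - (\<integral>\<omega>'. Theta L \<omega>' \<partial>tree_space L))\<^sup>2 \<partial>tree_space L)"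

end

theory Submission
  imports Defs
begin


abbreviation U :: "real measure" where "U \<equiv> uniform_measure lborel {0..1::real}"

definition Qop :: "(real \<Rightarrow> ennreal) \<Rightarrow> real \<Rightarrow> ennreal" where
  "Qop h z = (\<integral>\<^sup>+y. indicator {z<..} y * h y \<partial>U)"

lemma U_prob: "prob_space U"
  by (rule prob_space_uniform_measure) auto

lemma sets_U[simp, measurable_cong]: "sets U = sets borel" by simp

lemma nn_U:
  assumes [measurable]: "f \<in> borel_measurable borel"
  shows "(\<integral>\<^sup>+y. f y \<partial>U) = (\<integral>\<^sup>+y. f y * indicator {0..1} y \<partial>lborel)"
  by (subst nn_integral_uniform_measure) (auto simp: divide_ennreal_def)

lemma Qop_meas[measurable]:
  assumes [measurable]: "h \<in> borel_measurable borel"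
  shows "Qop h \<in> borel_measurable borel"
proof -
  interpret U: prob_space U by (rule U_prob)
  have "(\<lambda>(z,y). indicator {z<..} y * h y) \<in> borel_measurable (borel \<Otimes>\<^sub>M U)"
  proof -
    have e: "(\<lambda>(z,y). indicator {z<..} y * h y) = (\<lambda>(z::real,y). if z < y then h y else 0)"
      by (auto simp: indicator_def fun_eq_iff)
    have "(\<lambda>(z::real,y). if z < y then h y else 0) \<in> borel_measurable (borel \<Otimes>\<^sub>M (borel::real measure))"
      by measurable
    then have "(\<lambda>(z,y). indicator {z<..} y * h y) \<in> borel_measurable (borel \<Otimes>\<^sub>M (borel::real measure))"
      by (simp add: e)
    then show ?thesis
      using measurable_cong_sets[OF sets_pair_measure_cong[OF refl sets_U], of borel borel] by simp
  qed
  then show ?thesis unfolding Qop_def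
    using U.borel_measurable_nn_integral[of "\<lambda>z y. indicator {z<..} y * h y" borel] by simp
qed

lemma AE_U01: "AE y in lborel. y \<noteq> 0 \<and> y \<noteq> (1::real)"
  by (intro eventually_conj AE_lborel_singleton)

lemma Qop_cong:
  assumes [measurable]: "h \<in> borel_measurable borel" "h' \<in> borel_measurable borel"
    and eq: "\<And>y. 0 < y \<Longrightarrow> y < 1 \<Longrightarrow> h y = h' y"
  shows "Qop h z = Qop h' z"
  unfolding Qop_def
  apply (subst (1 2) nn_U)
    apply measurable
  apply (rule nn_integral_cong_AE)
  using AE_U01 by eventually_elim (auto simp: indicator_def eq)

lemma intU_cong:
  assumes [measurable]: "h \<in> borel_measurable borel" "h' \<in> borel_measurable borel"
    and eq: "\<And>y. 0 < y \<Longrightarrow> y < 1 \<Longrightarrow> h y = h' y"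
  shows "(\<integral>\<^sup>+y. h y \<partial>U) = (\<integral>\<^sup>+y. h' y \<partial>U)"
  apply (subst (1 2) nn_U)
    apply measurable
  apply (rule nn_integral_cong_AE)
  using AE_U01 by eventually_elim (auto simp: indicator_def eq)

lemma FTC_pow:
  fixes c :: real and z :: real
  assumes "c \<ge> 0" "0 \<le> z" "z \<le> 1"
  shows "(\<integral>\<^sup>+y. ennreal (c * (1-y)^k) * indicator {z..1} y \<partial>lborel) = ennreal (c * (1-z)^Suc k / Suc k)"
proof -
  have "(\<integral>\<^sup>+y. ennreal (c * (1-y)^k) * indicator {z..1} y \<partial>lborel) =
     ennreal ((\<lambda>y. - c * (1-y)^Suc k / Suc k) 1 - (\<lambda>y. - c * (1-y)^Suc k / Suc k) z)"
    apply (rule nn_integral_FTC_Icc)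
    using assms
      by (auto intro!: derivative_eq_intros simp del: power_Suc)
  then show ?thesis by simp
qed

lemma Qop_pow:
  fixes c :: real
  assumes "c \<ge> 0" "0 \<le> z" "z \<le> 1"
  shows "Qop (\<lambda>y. ennreal (c*(1-y)^k)) z = ennreal (c * (1-z)^Suc k / Suc k)"
proof -
  have "Qop (\<lambda>y. ennreal (c*(1-y)^k)) z =
     (\<integral>\<^sup>+y. ennreal (c * (1-y)^k) * indicator {z..1} y \<partial>lborel)"
    unfolding Qop_def
    apply (subst nn_U)
     apply measurable
    apply (rule nn_integral_cong_AE)
    using AE_lborel_singleton[of z] apply eventually_elim
    using assms by (auto simp: indicator_def)
  then show ?thesis using FTC_pow[OF assms] by simp
qed

lemma intU_pow:
  fixes c :: real
  assumes "c \<ge> 0"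
  shows "(\<integral>\<^sup>+y. ennreal (c*(1-y)^k) \<partial>U) = ennreal (c / Suc k)"
proof -
  have "(\<integral>\<^sup>+y. ennreal (c*(1-y)^k) \<partial>U) =
     (\<integral>\<^sup>+y. ennreal (c * (1-y)^k) * indicator {0..1} y \<partial>lborel)"
    by (subst nn_U) auto
  then show ?thesis using FTC_pow[OF assms, of 0] by simp
qed

lemma Qop_iter:
  fixes c :: real
  assumes "c \<ge> 0" "0 < z" "z < 1"
  shows "(Qop^^j) (\<lambda>y. ennreal (c*(1-y)^k)) z = ennreal (c * fact k / fact (k+j) * (1-z)^(k+j))"
  using assms(2,3)
proof (induction j arbitrary: z)
  case 0
  then show ?case by simp
next
  case (Suc j)
  have m: "(Qop^^j) (\<lambda>y. ennreal (c*(1-y)^k)) \<in> borel_measurable borel"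
    by (induction j) auto
  have "(Qop^^Suc j) (\<lambda>y. ennreal (c*(1-y)^k)) z = Qop ((Qop^^j) (\<lambda>y. ennreal (c*(1-y)^k))) z"
    by simp
  also have "\<dots> = Qop (\<lambda>y. ennreal (c * fact k / fact (k+j) * (1-y)^(k+j))) z"
    by (rule Qop_cong[OF m]) (auto simp: Suc.IH)
  also have "\<dots> = ennreal (c * fact k / fact (k+j) * (1-z)^Suc (k+j) / Suc (k+j))"
    using Suc.prems assms by (intro Qop_pow) auto
  also have "\<dots> = ennreal (c * fact k / fact (k + Suc j) * (1-z)^(k + Suc j))"
    by (simp add: field_simps)
  finally show ?case .
qed




abbreviation PM :: "nat list set \<Rightarrow> (nat list \<Rightarrow> real) measure" where
  "PM K \<equiv> PiM K (\<lambda>_. U)"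

interpretation PS: product_sigma_finite "\<lambda>_::nat list. U"
  by (simp add: product_sigma_finite_def prob_space_imp_sigma_finite U_prob)

lemma sorted_snoc_real:
  fixes l :: "real list"
  assumes "l \<noteq> []"
  shows "sorted_wrt (<) (l @ [y]) \<longleftrightarrow> sorted_wrt (<) l \<and> last l < y"
  using assms
proof (induction l rule: rev_induct)
  case Nil then show ?case by simp
next
  case (snoc x xs)
  then show ?case
    by (cases "xs = []") (auto simp: sorted_wrt_append)
qed

lemma pred_sorted:
  fixes z :: "_ \<Rightarrow> real"
  assumes "z \<in> borel_measurable M" "\<And>v. v \<in> set bs \<Longrightarrow> (\<lambda>w. w v) \<in> borel_measurable M"
  shows "Measurable.pred M (\<lambda>w. sorted_wrt (<) (z w # map w bs))"
  using assms
proof (induction bs arbitrary: z)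
  case Nil then show ?case by simp
next
  case (Cons v bs)
  have t: "transp ((<)::real\<Rightarrow>real\<Rightarrow>bool)" by (auto simp: transp_def)
  have [measurable]: "z \<in> borel_measurable M" "(\<lambda>w. w v) \<in> borel_measurable M" using Cons.prems by auto
  have p1: "Measurable.pred M (\<lambda>w. z w < w v)"
    unfolding pred_def using borel_measurable_less[of z M "\<lambda>w. w v"] Cons.prems by auto
  have p2: "Measurable.pred M (\<lambda>w. sorted_wrt (<) (w v # map w bs))"
    using Cons.prems by (intro Cons.IH) auto
  have "Measurable.pred M (\<lambda>w. z w < w v \<and> sorted_wrt (<) (w v # map w bs))"
    using p1 p2 by measurable
  then show ?case unfolding list.map sorted_wrt2[OF t] .
qed

lemma last_meas:
  fixes z :: "_ \<Rightarrow> real"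
  assumes "z \<in> borel_measurable M" "\<And>v. v \<in> set bs \<Longrightarrow> (\<lambda>w. w v) \<in> borel_measurable M"
    and "h \<in> borel_measurable borel"
  shows "(\<lambda>w. h (last (z w # map w bs))) \<in> borel_measurable M"
proof (cases "bs = []")
  case True then show ?thesis using assms by simp
next
  case False
  then have "(\<lambda>w. h (last (z w # map w bs))) = (\<lambda>w. h (w (last bs)))"
    by (auto simp: last_map)
  then show ?thesis using assms False by simp
qed

lemma comp_meas: "v \<in> K \<Longrightarrow> (\<lambda>w. w v) \<in> borel_measurable (PM K)"
  by simp

lemma chain:
  fixes J :: "nat list set" and bs :: "nat list list" and F :: "(nat list \<Rightarrow> real) \<Rightarrow> ennreal"
  assumes fin: "finite J" and dis: "set bs \<inter> J = {}" "distinct bs"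
   and Fm: "\<And>K. J \<subseteq> K \<Longrightarrow> F \<in> borel_measurable (PM K)"
   and zm: "\<And>K. J \<subseteq> K \<Longrightarrow> z \<in> borel_measurable (PM K)"
   and hm: "h \<in> borel_measurable borel"
   and Fi: "\<And>w v y. v \<in> set bs \<Longrightarrow> F (w(v := y)) = F w"
   and zi: "\<And>w v y. v \<in> set bs \<Longrightarrow> z (w(v := y)) = z w"
  shows "(\<integral>\<^sup>+w. F w * indicator {w. sorted_wrt (<) (z w # map w bs)} w * h (last (z w # map w bs)) \<partial>PM (J \<union> set bs))
        = (\<integral>\<^sup>+w. F w * (Qop^^length bs) h (z w) \<partial>PM J)"
  using dis hm Fi zi
proof (induction bs arbitrary: h rule: rev_induct)
  case Nil
  then show ?case by simp
next
  case (snoc v bs)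
  have vn: "v \<notin> J \<union> set bs" using snoc.prems by auto
  have eqset: "J \<union> set (bs @ [v]) = insert v (J \<union> set bs)" by auto
  have hm[measurable]: "h \<in> borel_measurable borel" by fact
  have meas: "(\<lambda>w. F w * indicator {w. sorted_wrt (<) (z w # map w (bs @ [v]))} w * h (last (z w # map w (bs @ [v]))))
     \<in> borel_measurable (PM (insert v (J \<union> set bs)))"
  proof -
    have "J \<subseteq> insert v (J \<union> set bs)" by auto
    note a = Fm[OF this] zm[OF this]
    have p: "Measurable.pred (PM (insert v (J \<union> set bs))) (\<lambda>w. sorted_wrt (<) (z w # map w (bs @ [v])))"
      by (rule pred_sorted[OF a(2)]) auto
    have l: "(\<lambda>w. h (last (z w # map w (bs @ [v])))) \<in> borel_measurable (PM (insert v (J \<union> set bs)))"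
      by (rule last_meas[OF a(2) _ hm]) auto
    show ?thesis using a(1) p l by measurable
  qed
  have "(\<integral>\<^sup>+w. F w * indicator {w. sorted_wrt (<) (z w # map w (bs @ [v]))} w * h (last (z w # map w (bs @ [v]))) \<partial>PM (J \<union> set (bs @ [v])))
     = (\<integral>\<^sup>+w. (\<integral>\<^sup>+y. F (w(v := y)) * indicator {w. sorted_wrt (<) (z w # map w (bs @ [v]))} (w(v := y)) * h (last (z (w(v := y)) # map (w(v := y)) (bs @ [v]))) \<partial>U) \<partial>PM (J \<union> set bs))"
    unfolding eqset
    by (rule PS.product_nn_integral_insert[OF _ vn meas]) (use fin in auto)
  also have "\<dots> = (\<integral>\<^sup>+w. F w * indicator {w. sorted_wrt (<) (z w # map w bs)} w * (Qop h) (last (z w # map w bs)) \<partial>PM (J \<union> set bs))"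
  proof (rule nn_integral_cong)
    fix w
    have vb: "v \<notin> set bs" using vn by auto
    have e1: "F (w(v := y)) = F w" and e2: "z (w(v := y)) = z w" for y
      by (rule snoc.prems(4), simp) (rule snoc.prems(5), simp)
    have e3: "map (w(v := y)) (bs @ [v]) = map w bs @ [y]" for y using vb by simp
    have e4: "indicator {w. sorted_wrt (<) (z w # map w (bs @ [v]))} (w(v := y)) * h (last (z (w(v := y)) # map (w(v := y)) (bs @ [v])))
       = indicator {w. sorted_wrt (<) (z w # map w bs)} w * (indicator {last (z w # map w bs)<..} y * h y)" for y
    proof -
      have s: "sorted_wrt (<) (z w # map w bs @ [y]) = (sorted_wrt (<) (z w # map w bs) \<and> last (z w # map w bs) < y)"
        using sorted_snoc_real[of "z w # map w bs" y] by simp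
      have l: "last (z w # map w bs @ [y]) = y" by simp
      show ?thesis
        by (simp only: indicator_def mem_Collect_eq e2 e3 s l) auto
    qed
    show "(\<integral>\<^sup>+y. F (w(v := y)) * indicator {w. sorted_wrt (<) (z w # map w (bs @ [v]))} (w(v := y)) * h (last (z (w(v := y)) # map (w(v := y)) (bs @ [v]))) \<partial>U)
       = F w * indicator {w. sorted_wrt (<) (z w # map w bs)} w * (Qop h) (last (z w # map w bs))"
      unfolding e1 mult.assoc e4 Qop_def
      by (subst nn_integral_cmult; simp)+
  qed
  also have "\<dots> = (\<integral>\<^sup>+w. F w * (Qop^^length bs) (Qop h) (z w) \<partial>PM J)"
    by (rule snoc.IH) (use snoc.prems in auto)
  also have "\<dots> = (\<integral>\<^sup>+w. F w * (Qop^^length (bs @ [v])) h (z w) \<partial>PM J)"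
    by (simp add: funpow_Suc_right del: funpow.simps)
  finally show ?case .
qed




definition seg :: "((nat list \<Rightarrow> real) \<Rightarrow> real) \<Rightarrow> nat list list \<Rightarrow> (real \<Rightarrow> ennreal) \<Rightarrow> (nat list \<Rightarrow> real) \<Rightarrow> ennreal" where
  "seg z bs h w = indicator {w. sorted_wrt (<) (z w # map w bs)} w * h (last (z w # map w bs))"

lemma seg_meas:
  assumes "z \<in> borel_measurable M" "\<And>v. v \<in> set bs \<Longrightarrow> (\<lambda>w. w v) \<in> borel_measurable M"
    and "h \<in> borel_measurable borel"
  shows "seg z bs h \<in> borel_measurable M"
proof -
  have p: "Measurable.pred M (\<lambda>w. sorted_wrt (<) (z w # map w bs))" by (rule pred_sorted[OF assms(1,2)])
  have l: "(\<lambda>w. h (last (z w # map w bs))) \<in> borel_measurable M" by (rule last_meas[OF assms])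
  show ?thesis unfolding seg_def using p l by measurable
qed

lemma seg_upd:
  assumes "v \<notin> set bs" "\<And>w y. z (w(v := y)) = z w"
  shows "seg z bs h (w(v := y)) = seg z bs h w"
  unfolding seg_def indicator_def mem_Collect_eq assms(2) map_fun_upd[OF assms(1)] ..

lemma chain':
  fixes J :: "nat list set" and bs :: "nat list list" and F :: "(nat list \<Rightarrow> real) \<Rightarrow> ennreal"
  assumes fin: "finite J" and dis: "set bs \<inter> J = {}" "distinct bs"
   and Fm: "\<And>K. J \<subseteq> K \<Longrightarrow> F \<in> borel_measurable (PM K)"
   and zm: "\<And>K. J \<subseteq> K \<Longrightarrow> z \<in> borel_measurable (PM K)"
   and hm: "h \<in> borel_measurable borel"
   and Fi: "\<And>w v y. v \<in> set bs \<Longrightarrow> F (w(v := y)) = F w"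
   and zi: "\<And>w v y. v \<in> set bs \<Longrightarrow> z (w(v := y)) = z w"
  shows "(\<integral>\<^sup>+w. F w * seg z bs h w \<partial>PM (J \<union> set bs))
        = (\<integral>\<^sup>+w. F w * (Qop^^length bs) h (z w) \<partial>PM J)"
  using chain[OF assms] by (simp add: seg_def mult.assoc)

definition h1 :: "real \<Rightarrow> ennreal" where "h1 = indicator {..<1}"

lemma h1_meas[measurable]: "h1 \<in> borel_measurable borel" unfolding h1_def by simp

lemma iter_meas[measurable]: "h \<in> borel_measurable borel \<Longrightarrow> (Qop^^j) h \<in> borel_measurable borel"
  by (induction j) auto

lemma iter_cong:
  assumes [measurable]: "h \<in> borel_measurable borel" "h' \<in> borel_measurable borel"
    and eq: "\<And>y. 0 < y \<Longrightarrow> y < 1 \<Longrightarrow> h y = h' y" and z: "0 < z" "z < 1"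
  shows "(Qop^^j) h z = (Qop^^j) h' z"
proof (cases j)
  case 0 then show ?thesis using eq z by simp
next
  case (Suc i)
  have "Qop h = Qop h'" by (rule ext, rule Qop_cong) (auto simp: eq)
  then show ?thesis by (simp add: Suc funpow_Suc_right del: funpow.simps)
qed

lemma g_closed:
  assumes "0 < z" "z < 1"
  shows "(Qop^^a) h1 z = ennreal ((1-z)^a / fact a)"
proof -
  have "(Qop^^a) h1 z = (Qop^^a) (\<lambda>y. ennreal (1*(1-y)^0)) z"
    by (rule iter_cong) (use assms in \<open>auto simp: h1_def\<close>)
  also have "\<dots> = ennreal ((1-z)^a / fact a)"
    using Qop_iter[of 1 z a 0] assms by simp
  finally show ?thesis .
qed

lemma final_closed:
  fixes a s :: nat
  shows "(\<integral>\<^sup>+y. (Qop^^s) (\<lambda>y. (Qop^^a) h1 y * (Qop^^a) h1 y) y \<partial>U)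
       = ennreal (fact (2*a) / (fact a ^ 2 * fact (2*a + s + 1)))"
proof -
  define c :: real where "c = 1 / fact a ^ 2"
  have c0: "c \<ge> 0" by (simp add: c_def)
  have "(\<integral>\<^sup>+y. (Qop^^s) (\<lambda>y. (Qop^^a) h1 y * (Qop^^a) h1 y) y \<partial>U)
      = (\<integral>\<^sup>+y. (Qop^^s) (\<lambda>y. ennreal (c * (1-y)^(2*a))) y \<partial>U)"
  proof (rule intU_cong)
    fix y :: real assume y: "0 < y" "y < 1"
    show "(Qop^^s) (\<lambda>y. (Qop^^a) h1 y * (Qop^^a) h1 y) y = (Qop^^s) (\<lambda>y. ennreal (c * (1-y)^(2*a))) y"
    proof (rule iter_cong)
      fix t :: real assume t: "0 < t" "t < 1"
      show "(Qop^^a) h1 t * (Qop^^a) h1 t = ennreal (c * (1-t)^(2*a))"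
        using t by (simp add: g_closed ennreal_mult'[symmetric] c_def power_mult power2_eq_square field_simps
                     flip: ennreal_mult)
    qed (use y in auto)
  qed auto
  also have "\<dots> = (\<integral>\<^sup>+y. ennreal (c * fact (2*a) / fact (2*a + s) * (1-y)^(2*a+s)) \<partial>U)"
    by (rule intU_cong) (auto simp: Qop_iter c0)
  also have "\<dots> = ennreal (c * fact (2*a) / fact (2*a + s) / Suc (2*a+s))"
    by (rule intU_pow) (simp add: c0)
  also have "\<dots> = ennreal (fact (2*a) / (fact a ^ 2 * fact (2*a + s + 1)))"
    by (simp add: c_def field_simps)
  finally show ?thesis .
qed




lemma PM_prob: "prob_space (PM K)"
  by (rule prob_space_PiM) (rule U_prob)

lemma single_coord:
  assumes "finite J" "r \<in> J" and [measurable]: "k \<in> borel_measurable borel"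
  shows "(\<integral>\<^sup>+w. k (w r) \<partial>PM J) = (\<integral>\<^sup>+y. k y \<partial>U)"
proof -
  have J: "J = insert r (J - {r})" using assms by auto
  interpret P: prob_space "PM (J - {r})" by (rule PM_prob)
  have "(\<integral>\<^sup>+w. k (w r) \<partial>PM J) = (\<integral>\<^sup>+w. k (w r) \<partial>PM (insert r (J - {r})))"
    using J by simp
  also have "\<dots> = (\<integral>\<^sup>+w. (\<integral>\<^sup>+y. k ((w(r := y)) r) \<partial>U) \<partial>PM (J - {r}))"
    by (rule PS.product_nn_integral_insert) (use assms in auto)
  also have "\<dots> = (\<integral>\<^sup>+w. (\<integral>\<^sup>+y. k y \<partial>U) \<partial>PM (J - {r}))" by simp
  also have "\<dots> = (\<integral>\<^sup>+y. k y \<partial>U)" by (simp add: P.emeasure_space_1)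
  finally show ?thesis .
qed

lemma pair_int:
  fixes R :: "nat list set"
  assumes fin: "finite R" and dis: "distinct (r # rest @ bs1 @ bs2)"
    and sub: "set (r # rest @ bs1 @ bs2) \<subseteq> R" and len: "length bs1 = a" "length bs2 = a"
  shows "(\<integral>\<^sup>+w. seg (\<lambda>w. w r) rest (\<lambda>_. 1) w * seg (\<lambda>w. w (last (r # rest))) bs1 h1 w
             * seg (\<lambda>w. w (last (r # rest))) bs2 h1 w \<partial>PM R)
       = ennreal (fact (2*a) / (fact a ^ 2 * fact (2*a + length rest + 1)))"
proof -
  define c where "c = last (r # rest)"
  have cin: "c \<in> set (r # rest)" unfolding c_def by (rule last_in_set) simp
  define g where "g = (Qop^^a) h1"
  have gm[measurable]: "g \<in> borel_measurable borel" unfolding g_def by simp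
  define J1 where "J1 = R - set bs2"
  define J2 where "J2 = J1 - set bs1"
  define J3 where "J3 = J2 - set rest"
  have R1: "R = J1 \<union> set bs2" and R2: "J1 = J2 \<union> set bs1" and R3: "J2 = J3 \<union> set rest"
    using sub dis by (auto simp: J1_def J2_def J3_def)
  have finJ: "finite J1" "finite J2" "finite J3" using fin by (auto simp: J1_def J2_def J3_def)
  have rJ3: "r \<in> J3" using sub dis by (auto simp: J1_def J2_def J3_def)
  have cJ2: "c \<in> J2" using sub dis cin by (auto simp: J1_def J2_def J3_def)
  have restJ2: "set rest \<subseteq> J2" using sub dis by (auto simp: J1_def J2_def J3_def)
  have bs1J1: "set bs1 \<subseteq> J1" using sub dis by (auto simp: J1_def J2_def J3_def)
  have d1: "set bs2 \<inter> J1 = {}" "set bs1 \<inter> J2 = {}" "set rest \<inter> J3 = {}"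
    by (auto simp: J1_def J2_def J3_def)
  have d2: "distinct bs2" "distinct bs1" "distinct rest" using dis by auto
  have nb2: "v \<in> set bs2 \<Longrightarrow> v \<notin> set rest \<and> v \<notin> set bs1 \<and> v \<noteq> r \<and> v \<noteq> c" for v
    using dis cin by auto
  have nb1: "v \<in> set bs1 \<Longrightarrow> v \<notin> set rest \<and> v \<noteq> r \<and> v \<noteq> c" for v
    using dis cin by auto
  have nrest: "v \<in> set rest \<Longrightarrow> v \<noteq> r" for v using dis by auto
  have compm: "v \<in> K \<Longrightarrow> (\<lambda>w. w v) \<in> borel_measurable (PM K)" for v K by simp
  define F1 where "F1 = (\<lambda>w. seg (\<lambda>w. w r) rest (\<lambda>_. 1) w * seg (\<lambda>w. w c) bs1 h1 w)"
  have "(\<integral>\<^sup>+w. seg (\<lambda>w. w r) rest (\<lambda>_. 1) w * seg (\<lambda>w. w c) bs1 h1 w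
             * seg (\<lambda>w. w c) bs2 h1 w \<partial>PM R)
      = (\<integral>\<^sup>+w. F1 w * seg (\<lambda>w. w c) bs2 h1 w \<partial>PM (J1 \<union> set bs2))"
    unfolding F1_def R1[symmetric] ..
  also have "\<dots> = (\<integral>\<^sup>+w. F1 w * g (w c) \<partial>PM J1)"
    unfolding g_def len(2)[symmetric]
  proof (rule chain'[OF finJ(1) d1(1) d2(1)])
    fix K assume K: "J1 \<subseteq> K"
    have a: "seg (\<lambda>w. w r) rest (\<lambda>_. 1) \<in> borel_measurable (PM K)"
      by (rule seg_meas) (use K cJ2 restJ2 rJ3 R2 R3 in \<open>auto\<close>)
    have b: "seg (\<lambda>w. w c) bs1 h1 \<in> borel_measurable (PM K)"
      by (rule seg_meas) (use K cJ2 bs1J1 R2 in \<open>auto\<close>)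
    show "F1 \<in> borel_measurable (PM K)" unfolding F1_def using a b by measurable
    show "(\<lambda>w. w c) \<in> borel_measurable (PM K)" using K cJ2 R2 by auto
  next
    fix w v y assume v: "v \<in> set bs2"
    have e1: "seg (\<lambda>w. w r) rest (\<lambda>_. 1) (w(v := y)) = seg (\<lambda>w. w r) rest (\<lambda>_. 1) w"
      by (rule seg_upd) (use nb2[OF v] in auto)
    have e2: "seg (\<lambda>w. w c) bs1 h1 (w(v := y)) = seg (\<lambda>w. w c) bs1 h1 w"
      by (rule seg_upd) (use nb2[OF v] in auto)
    show "F1 (w(v := y)) = F1 w" unfolding F1_def e1 e2 ..
    show "(w(v := y)) c = w c" by (rule fun_upd_other) (use nb2[OF v] in auto)
  qed simp
  also have "\<dots> = (\<integral>\<^sup>+w. (seg (\<lambda>w. w r) rest (\<lambda>_. 1) w * g (w c)) * seg (\<lambda>w. w c) bs1 h1 w \<partial>PM (J2 \<union> set bs1))"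
    unfolding F1_def R2[symmetric] by (simp add: ac_simps)
  also have "\<dots> = (\<integral>\<^sup>+w. (seg (\<lambda>w. w r) rest (\<lambda>_. 1) w * g (w c)) * g (w c) \<partial>PM J2)"
    unfolding g_def len(1)[symmetric]
  proof (rule chain'[OF finJ(2) d1(2) d2(2)])
    fix K assume K: "J2 \<subseteq> K"
    have a: "seg (\<lambda>w. w r) rest (\<lambda>_. 1) \<in> borel_measurable (PM K)"
      by (rule seg_meas) (use K restJ2 rJ3 R3 in \<open>auto\<close>)
    have b: "(\<lambda>w. w c) \<in> borel_measurable (PM K)" using K cJ2 by auto
    show "(\<lambda>w. seg (\<lambda>w. w r) rest (\<lambda>_. 1) w * (Qop ^^ length bs1) h1 (w c)) \<in> borel_measurable (PM K)"
      using a b by measurable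
    show "(\<lambda>w. w c) \<in> borel_measurable (PM K)" by (rule b)
  next
    fix w v y assume v: "v \<in> set bs1"
    show "seg (\<lambda>w. w r) rest (\<lambda>_. 1) (w(v := y)) * (Qop ^^ length bs1) h1 ((w(v := y)) c) =
          seg (\<lambda>w. w r) rest (\<lambda>_. 1) w * (Qop ^^ length bs1) h1 (w c)"
    proof -
      have e1: "seg (\<lambda>w. w r) rest (\<lambda>_. 1) (w(v := y)) = seg (\<lambda>w. w r) rest (\<lambda>_. 1) w"
        by (rule seg_upd) (use nb1[OF v] in auto)
      show ?thesis unfolding e1 using nb1[OF v] by auto
    qed
    show "(w(v := y)) c = w c" by (rule fun_upd_other) (use nb1[OF v] in auto)
  qed simp
  also have "\<dots> = (\<integral>\<^sup>+w. 1 * seg (\<lambda>w. w r) rest (\<lambda>y. g y * g y) w \<partial>PM (J3 \<union> set rest))"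
  proof -
    have "w c = last (w r # map w rest)" for w :: "nat list \<Rightarrow> real"
      unfolding c_def by (cases "rest = []") (auto simp: last_map)
    then show ?thesis unfolding R3[symmetric] by (simp add: seg_def mult.assoc)
  qed
  also have "\<dots> = (\<integral>\<^sup>+w. 1 * (Qop^^length rest) (\<lambda>y. g y * g y) (w r) \<partial>PM J3)"
  proof (rule chain'[OF finJ(3) d1(3) d2(3)])
    fix K assume K: "J3 \<subseteq> K"
    show "(\<lambda>w. w r) \<in> borel_measurable (PM K)" using K rJ3 by auto
  next
    fix w v y assume v: "v \<in> set rest"
    show "(w(v := y)) r = w r" using nrest[OF v] by simp
  qed auto
  also have "\<dots> = (\<integral>\<^sup>+y. (Qop^^length rest) (\<lambda>y. g y * g y) y \<partial>U)"
    by (simp add: single_coord[OF finJ(3) rJ3])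
  also have "\<dots> = ennreal (fact (2*a) / (fact a ^ 2 * fact (2*a + length rest + 1)))"
    unfolding g_def by (rule final_closed)
  finally show ?thesis unfolding c_def .
qed




fun lcp :: "nat list \<Rightarrow> nat list \<Rightarrow> nat" where
  "lcp (x#xs) (y#ys) = (if x = y then Suc (lcp xs ys) else 0)"
| "lcp _ _ = 0"

lemma lcp_le: "lcp xs ys \<le> length xs"
  by (induction xs ys rule: lcp.induct) auto

lemma lcp_take: "k \<le> lcp xs ys \<Longrightarrow> take k xs = take k ys"
proof (induction xs ys arbitrary: k rule: lcp.induct)
  case (1 x xs y ys)
  then show ?case by (cases k) (auto split: if_splits)
qed auto

lemma lcp_take_neq: "lcp xs ys < k \<Longrightarrow> k \<le> length xs \<Longrightarrow> k \<le> length ys \<Longrightarrow> take k xs \<noteq> take k ys"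
proof (induction xs ys arbitrary: k rule: lcp.induct)
  case (1 x xs y ys)
  then show ?case by (cases k) (auto split: if_splits)
qed auto

lemma lcp_self: "lcp xs xs = length xs"
  by (induction xs) auto

lemma lcp_eq: "length xs = length ys \<Longrightarrow> lcp xs ys = length xs \<Longrightarrow> xs = ys"
  using lcp_take[of "length xs" xs ys] by simp

lemma consec:
  fixes f :: "nat \<Rightarrow> real"
  shows "sorted_wrt (<) (map f [0..<Suc n]) \<longleftrightarrow> (\<forall>k<n. f k < f (Suc k))"
proof (induction n)
  case 0 then show ?case by simp
next
  case (Suc n)
  have "sorted_wrt (<) (map f [0..<Suc (Suc n)]) = sorted_wrt (<) (map f [0..<Suc n] @ [f (Suc n)])"
    by simp
  also have "\<dots> = (sorted_wrt (<) (map f [0..<Suc n]) \<and> f n < f (Suc n))"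
    by (subst sorted_snoc_real) (auto simp del: upt_Suc simp: last_map)
  also have "\<dots> = (\<forall>k<Suc n. f k < f (Suc k))"
    using Suc.IH less_Suc_eq by auto
  finally show ?case .
qed

lemma sorted_le_last:
  fixes l :: "real list"
  assumes "sorted_wrt (<) l" "x \<in> set l"
  shows "x \<le> last l"
proof -
  have "l \<noteq> []" using assms by auto
  then have l: "l = butlast l @ [last l]" by simp
  have "sorted_wrt (<) (butlast l @ [last l])" using assms(1) l by metis
  then have "\<forall>u\<in>set (butlast l). u < last l" by (simp add: sorted_wrt_append)
  moreover have "x \<in> set (butlast l) \<or> x = last l" using assms(2) l
    by (metis Un_iff empty_iff list.set(1) list.set(2) set_append singletonD)
  ultimately show ?thesis by fastforce
qed

lemma sorted_split:
  fixes l t :: "real list"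
  assumes "l \<noteq> []"
  shows "sorted_wrt (<) (l @ t) \<longleftrightarrow> sorted_wrt (<) l \<and> sorted_wrt (<) (last l # t)"
proof
  assume a: "sorted_wrt (<) (l @ t)"
  then show "sorted_wrt (<) l \<and> sorted_wrt (<) (last l # t)"
    using assms by (auto simp: sorted_wrt_append)
next
  assume a: "sorted_wrt (<) l \<and> sorted_wrt (<) (last l # t)"
  have "\<forall>x\<in>set l. \<forall>y\<in>set t. x < y"
  proof (intro ballI)
    fix x y assume "x \<in> set l" "y \<in> set t"
    then have "x \<le> last l" "last l < y" using sorted_le_last a by auto
    then show "x < y" by simp
  qed
  then show "sorted_wrt (<) (l @ t)" using a by (simp add: sorted_wrt_append)
qed

lemma open_iff:
  assumes "length xs = L"
  shows "open_path L w xs \<longleftrightarrow> sorted_wrt (<) (map (\<lambda>k. w (take k xs)) [0..<L] @ [1])"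
proof -
  define f where "f k = node_value L w (take k xs)" for k
  have "open_path L w xs \<longleftrightarrow> (\<forall>k<L. f k < f (Suc k))"
    unfolding open_path_def f_def ..
  also have "\<dots> \<longleftrightarrow> sorted_wrt (<) (map f [0..<Suc L])" by (rule consec[symmetric])
  also have "map f [0..<Suc L] = map (\<lambda>k. w (take k xs)) [0..<L] @ [1]"
    using assms by (simp add: f_def node_value_def)
  finally show ?thesis .
qed

lemma paths_nodes:
  assumes "xs \<in> tree_paths L" "k < L"
  shows "take k xs \<in> random_nodes L"
  using assms by (auto simp: tree_paths_def random_nodes_def tree_node_def)

lemma finite_random_nodes: "finite (random_nodes L)"
proof -
  have "random_nodes L \<subseteq> {xs. set xs \<subseteq> {..<L} \<and> length xs \<le> L}"
    by (auto simp: random_nodes_def tree_node_def in_set_conv_nth) (meson diff_le_self order_less_le_trans)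
  moreover have "finite {xs. set xs \<subseteq> {..<L} \<and> length xs \<le> L}"
    by (rule finite_lists_length_le) simp
  ultimately show ?thesis by (rule finite_subset)
qed

definition pp :: "nat \<Rightarrow> nat \<Rightarrow> real" where
  "pp L m = fact (2*(L-1-m)) / (fact (L-1-m) ^ 2 * fact (L + (L-1-m)))"

lemma seg_sq: "seg z bs (\<lambda>_. 1) w * seg z bs (\<lambda>_. 1) w = seg z bs (\<lambda>_. 1) w"
  by (simp add: seg_def indicator_def)

lemma ind_open:
  assumes "length xs = L" "1 \<le> s" "s \<le> L"
  shows "(indicator {w. open_path L w xs} w :: ennreal) =
    seg (\<lambda>w. w []) (map (\<lambda>k. take k xs) [1..<s]) (\<lambda>_. 1) w *
    seg (\<lambda>w. w (last ([] # map (\<lambda>k. take k xs) [1..<s]))) (map (\<lambda>k. take k xs) [s..<L]) h1 w"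
proof -
  define l where "l = w [] # map w (map (\<lambda>k. take k xs) [1..<s])"
  define t where "t = map w (map (\<lambda>k. take k xs) [s..<L])"
  have up: "[0..<L] = [0..<s] @ [s..<L]" using assms upt_add_eq_append[of 0 s "L - s"] by simp
  have up2: "[0..<s] = 0 # [1..<s]" using assms upt_rec by auto
  have "map (\<lambda>k. w (take k xs)) [0..<L] @ [1] = l @ (t @ [1])"
    unfolding up up2 l_def t_def by simp
  then have "open_path L w xs \<longleftrightarrow> sorted_wrt (<) (l @ (t @ [1]))"
    using open_iff[OF assms(1)] by simp
  also have "\<dots> \<longleftrightarrow> sorted_wrt (<) l \<and> sorted_wrt (<) (last l # t @ [1])"
    by (rule sorted_split) (simp add: l_def)
  also have "sorted_wrt (<) (last l # t @ [1]) \<longleftrightarrow> sorted_wrt (<) (last l # t) \<and> last (last l # t) < 1"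
    using sorted_snoc_real[of "last l # t" 1] by simp
  finally have o: "open_path L w xs \<longleftrightarrow> sorted_wrt (<) l \<and> sorted_wrt (<) (last l # t) \<and> last (last l # t) < 1"
    by simp
  have ll: "last l = w (last ([] # map (\<lambda>k. take k xs) [1..<s]))"
    unfolding l_def by (cases "[1..<s] = []") (auto simp: last_map)
  show ?thesis
    unfolding seg_def h1_def using o ll unfolding l_def t_def
    by (simp add: indicator_def)
qed




lemma pair_paths:
  assumes xs: "xs \<in> tree_paths L" and ys: "ys \<in> tree_paths L" and L: "1 \<le> L"
  shows "(\<integral>\<^sup>+w. indicator {w. open_path L w xs} w * indicator {w. open_path L w ys} w \<partial>tree_space L)
     = ennreal (pp L (lcp xs ys))"
proof -
  have lx: "length xs = L" and ly: "length ys = L" using xs ys by (auto simp: tree_paths_def)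
  define m where "m = lcp xs ys"
  have mL: "m \<le> L" unfolding m_def using lcp_le[of xs ys] lx by simp
  define s where "s = min (Suc m) L"
  have s: "1 \<le> s" "s \<le> L" using L by (auto simp: s_def)
  define rest where "rest = map (\<lambda>k. take k xs) [1..<s]"
  define bs1 where "bs1 = map (\<lambda>k. take k xs) [s..<L]"
  define bs2 where "bs2 = map (\<lambda>k. take k ys) [s..<L]"
  have restY: "map (\<lambda>k. take k ys) [1..<s] = rest"
    unfolding rest_def by (rule map_cong) (auto simp: s_def m_def intro!: lcp_take[symmetric])
  have ix: "(indicator {w. open_path L w xs} w :: ennreal) =
     seg (\<lambda>w. w []) rest (\<lambda>_. 1) w * seg (\<lambda>w. w (last ([] # rest))) bs1 h1 w" for w
    unfolding rest_def bs1_def by (rule ind_open[OF lx s])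
  have iy: "(indicator {w. open_path L w ys} w :: ennreal) =
     seg (\<lambda>w. w []) rest (\<lambda>_. 1) w * seg (\<lambda>w. w (last ([] # rest))) bs2 h1 w" for w
    using ind_open[OF ly s, of w] unfolding restY bs2_def .
  have prod: "(indicator {w. open_path L w xs} w :: ennreal) * indicator {w. open_path L w ys} w
     = seg (\<lambda>w. w []) rest (\<lambda>_. 1) w * seg (\<lambda>w. w (last ([] # rest))) bs1 h1 w
       * seg (\<lambda>w. w (last ([] # rest))) bs2 h1 w" for w
  proof -
    have "(indicator {w. open_path L w xs} w :: ennreal) * indicator {w. open_path L w ys} w =
      (seg (\<lambda>w. w []) rest (\<lambda>_. 1) w * seg (\<lambda>w. w []) rest (\<lambda>_. 1) w) *
       seg (\<lambda>w. w (last ([] # rest))) bs1 h1 w * seg (\<lambda>w. w (last ([] # rest))) bs2 h1 w"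
      unfolding ix iy by (simp add: ac_simps)
    then show ?thesis by (simp only: seg_sq)
  qed
  have A: "[] # rest @ bs1 = map (\<lambda>k. take k xs) [0..<L]"
  proof -
    have up: "[0..<L] = [0..<s] @ [s..<L]" using s upt_add_eq_append[of 0 s "L - s"] by simp
    have up2: "[0..<s] = 0 # [1..<s]" using s upt_rec by auto
    show ?thesis unfolding up up2 rest_def bs1_def by simp
  qed
  have inj1: "inj_on (\<lambda>k. take k zs) {0..<L}" if "length zs = L" for zs :: "nat list"
  proof (rule inj_onI)
    fix i j assume "i \<in> {0..<L}" "j \<in> {0..<L}" "take i zs = take j zs"
    then have "length (take i zs) = length (take j zs)" by simp
    then show "i = j" using that \<open>i \<in> {0..<L}\<close> \<open>j \<in> {0..<L}\<close> by simp
  qed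
  have distA: "distinct (map (\<lambda>k. take k xs) [0..<L])"
    using inj1[OF lx] by (simp add: distinct_map)
  have dist2: "distinct bs2"
  proof -
    have "inj_on (\<lambda>k. take k ys) {s..<L}" using inj1[OF ly] by (rule inj_on_subset) auto
    then show ?thesis unfolding bs2_def by (simp add: distinct_map)
  qed
  have disj: "set (map (\<lambda>k. take k xs) [0..<L]) \<inter> set bs2 = {}"
  proof (rule ccontr)
    assume "\<not> ?thesis"
    then obtain j k where jk: "j < L" "s \<le> k" "k < L" "take j xs = take k ys"
      unfolding bs2_def by auto
    then have "length (take j xs) = length (take k ys)" by simp
    then have jk2: "j = k" using lx ly jk(1,3) by simp
    have mk: "m < k" using jk(2,3) mL unfolding s_def by linarith
    have "take k xs \<noteq> take k ys" using lcp_take_neq[of xs ys k] mk jk(3) lx ly unfolding m_def by simp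
    then show False using jk(4) jk2 by simp
  qed
  have dis: "distinct ([] # rest @ bs1 @ bs2)"
  proof -
    have "distinct (([] # rest @ bs1) @ bs2)" unfolding A distinct_append using distA dist2 disj by simp
    then show ?thesis by simp
  qed
  have sub: "set ([] # rest @ bs1 @ bs2) \<subseteq> random_nodes L"
  proof -
    have a1: "set (map (\<lambda>k. take k xs) [0..<L]) \<subseteq> random_nodes L" using paths_nodes[OF xs] by auto
    have a2: "set bs2 \<subseteq> random_nodes L" unfolding bs2_def using paths_nodes[OF ys] by auto
    have "set (([] # rest @ bs1) @ bs2) \<subseteq> random_nodes L" unfolding A set_append using a1 a2 by simp
    then show ?thesis by simp
  qed
  have len: "length bs1 = L - s" "length bs2 = L - s" by (auto simp: bs1_def bs2_def)
  have "(\<integral>\<^sup>+w. indicator {w. open_path L w xs} w * indicator {w. open_path L w ys} w \<partial>tree_space L)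
     = (\<integral>\<^sup>+w. seg (\<lambda>w. w []) rest (\<lambda>_. 1) w * seg (\<lambda>w. w (last ([] # rest))) bs1 h1 w
       * seg (\<lambda>w. w (last ([] # rest))) bs2 h1 w \<partial>PM (random_nodes L))"
    unfolding tree_space_def prod ..
  also have "\<dots> = ennreal (fact (2*(L-s)) / (fact (L-s) ^ 2 * fact (2*(L-s) + length rest + 1)))"
    by (rule pair_int[OF finite_random_nodes dis sub len])
  also have "\<dots> = ennreal (pp L (lcp xs ys))"
  proof -
    have a: "L - 1 - m = L - s" using mL by (auto simp: s_def)
    have b: "2*(L-s) + length rest + 1 = L + (L - s)" using s by (simp add: rest_def)
    show ?thesis unfolding pp_def m_def[symmetric] a b ..
  qed
  finally show ?thesis .
qed




lemma paths_0: "tree_paths 0 = {[]}"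
  by (auto simp: tree_paths_def tree_node_def)

lemma paths_Suc: "tree_paths (Suc L) = (\<lambda>(c, r). c # r) ` ({..<Suc L} \<times> tree_paths L)"
proof (intro set_eqI iffI)
  fix xs assume xs: "xs \<in> tree_paths (Suc L)"
  then obtain c r where xr: "xs = c # r" by (cases xs) (auto simp: tree_paths_def)
  have c: "c < Suc L" using xs xr by (auto simp: tree_paths_def tree_node_def)
  have r: "r \<in> tree_paths L"
  proof -
    have "length r = L" using xs xr by (simp add: tree_paths_def)
    moreover have "r ! j < L - j" if "j < length r" for j
    proof -
      have "(c # r) ! Suc j < Suc L - Suc j" using xs xr that by (auto simp: tree_paths_def tree_node_def)
      then show ?thesis by simp
    qed
    ultimately show ?thesis by (auto simp: tree_paths_def tree_node_def)
  qed
  show "xs \<in> (\<lambda>(c, r). c # r) ` ({..<Suc L} \<times> tree_paths L)"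
    using c r xr by auto
next
  fix xs assume "xs \<in> (\<lambda>(c, r). c # r) ` ({..<Suc L} \<times> tree_paths L)"
  then obtain c r where xr: "xs = c # r" and c: "c < Suc L" and r: "r \<in> tree_paths L" by auto
  have "(c # r) ! j < Suc L - j" if "j < Suc L" for j
  proof (cases j)
    case 0 then show ?thesis using c by simp
  next
    case (Suc i) then show ?thesis using r that by (auto simp: tree_paths_def tree_node_def)
  qed
  then show "xs \<in> tree_paths (Suc L)" using r xr by (auto simp: tree_paths_def tree_node_def)
qed

lemma inj_cons: "inj_on (\<lambda>(c, r). c # r) A"
  by (auto simp: inj_on_def)

lemma paths_fin_card: "finite (tree_paths L) \<and> card (tree_paths L) = fact L"
proof (induction L)
  case 0 then show ?case by (simp add: paths_0)
next
  case (Suc L)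
  then show ?case
    unfolding paths_Suc by (simp add: card_image[OF inj_cons] card_cartesian_product)
qed

lemma sum_paths_Suc:
  fixes g :: "nat list \<Rightarrow> real"
  shows "(\<Sum>xs\<in>tree_paths (Suc L). g xs) = (\<Sum>c<Suc L. \<Sum>r\<in>tree_paths L. g (c # r))"
proof -
  have "(\<Sum>xs\<in>tree_paths (Suc L). g xs) = sum (g \<circ> (\<lambda>(c, r). c # r)) ({..<Suc L} \<times> tree_paths L)"
    unfolding paths_Suc by (rule sum.reindex[OF inj_cons])
  also have "g \<circ> (\<lambda>(c, r). c # r) = (\<lambda>(c, r). g (c # r))" by auto
  also have "sum (\<lambda>(c, r). g (c # r)) ({..<Suc L} \<times> tree_paths L) = (\<Sum>c<Suc L. \<Sum>r\<in>tree_paths L. g (c # r))"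
    by (rule sum.cartesian_product[symmetric])
  finally show ?thesis .
qed

lemma sum_if_eq:
  fixes X Y :: real
  assumes "finite A" "c \<in> A"
  shows "(\<Sum>c'\<in>A. if c = c' then X else Y) = X + (card A - 1) * Y"
proof -
  have "(\<Sum>c'\<in>A. if c = c' then X else Y) = (if c = c then X else Y) + (\<Sum>c'\<in>A - {c}. if c = c' then X else Y)"
    by (rule sum.remove[OF assms])
  also have "(\<Sum>c'\<in>A - {c}. if c = c' then X else Y) = (\<Sum>c'\<in>A - {c}. Y)"
    by (rule sum.cong) auto
  finally show ?thesis using assms by (simp add: of_nat_diff card_Diff_singleton)
qed

lemma pair_sum:
  fixes f :: "nat \<Rightarrow> real"
  shows "(\<Sum>xs\<in>tree_paths L. \<Sum>ys\<in>tree_paths L. f (lcp xs ys))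
     = (\<Sum>m<L. fact L * real (L-m-1) * fact (L-m-1) * f m) + fact L * f L"
proof (induction L arbitrary: f)
  case 0
  then show ?case by (simp add: paths_0)
next
  case (Suc L)
  have fin: "finite (tree_paths L)" and card: "card (tree_paths L) = fact L" using paths_fin_card by auto
  define P where "P = tree_paths L"
  have "(\<Sum>xs\<in>tree_paths (Suc L). \<Sum>ys\<in>tree_paths (Suc L). f (lcp xs ys))
     = (\<Sum>c<Suc L. \<Sum>r\<in>P. \<Sum>c'<Suc L. \<Sum>r'\<in>P. f (lcp (c # r) (c' # r')))"
    unfolding sum_paths_Suc P_def ..
  also have "\<dots> = (\<Sum>c<Suc L. \<Sum>c'<Suc L. \<Sum>r\<in>P. \<Sum>r'\<in>P. f (lcp (c # r) (c' # r')))"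
    by (rule sum.cong[OF refl], rule sum.swap)
  also have "\<dots> = (\<Sum>c<Suc L. \<Sum>c'<Suc L. if c = c' then (\<Sum>r\<in>P. \<Sum>r'\<in>P. f (Suc (lcp r r'))) else fact L * fact L * f 0)"
    by (rule sum.cong[OF refl], rule sum.cong[OF refl]) (simp add: card P_def)
  also have "\<dots> = (\<Sum>c<Suc L. (\<Sum>r\<in>P. \<Sum>r'\<in>P. f (Suc (lcp r r'))) + real L * (fact L * fact L * f 0))"
    by (rule sum.cong[OF refl], subst sum_if_eq) auto
  also have "\<dots> = real (Suc L) * ((\<Sum>m<L. fact L * real (L-m-1) * fact (L-m-1) * f (Suc m)) + fact L * f (Suc L)
        + real L * (fact L * fact L * f 0))"
    using Suc.IH[of "\<lambda>m. f (Suc m)"] by (simp add: P_def)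
  also have "\<dots> = (\<Sum>m<Suc L. fact (Suc L) * real (Suc L-m-1) * fact (Suc L-m-1) * f m) + fact (Suc L) * f (Suc L)"
    unfolding sum.lessThan_Suc_shift
    by (simp add: sum_distrib_left algebra_simps)
  finally show ?case .
qed




definition u :: "nat \<Rightarrow> nat \<Rightarrow> real" where
  "u L a = fact (2*a) * fact L / (fact a * fact (L+a))"

definition Ssum :: "nat \<Rightarrow> real" where
  "Ssum L = (\<Sum>a<L. real a * u L a)"

lemma u_Suc_a: "u L (Suc a) = u L a * (2 * (2*real a+1)) / (real L + real a + 1)"
proof -
  have f1: "fact (2 * Suc a) = real (2*a+2) * (real (2*a+1) * (fact (2*a) :: real))"
    by (simp add: algebra_simps)
  have f2: "fact (L + Suc a) = real (L+a+1) * (fact (L+a) :: real)" by simp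
  have f3: "fact (Suc a) = real (a+1) * (fact a :: real)" by simp
  have nz: "(fact a :: real) \<noteq> 0" "(fact (L+a) :: real) \<noteq> 0" "real (L+a+1) \<noteq> 0" "real (a+1) \<noteq> 0"
    by auto
  have "u L (Suc a) = real (2*a+2) * (real (2*a+1) * fact (2*a)) * fact L / (real (a+1) * fact a * (real (L+a+1) * fact (L+a)))"
    unfolding u_def f1 f2 f3 by simp
  also have "\<dots> = u L a * (2 * (2*a+1)) / real (L+a+1)"
  proof -
    have key: "\<And>(A::real) Lr f2a fL fa fLa. fa \<noteq> 0 \<Longrightarrow> fLa \<noteq> 0 \<Longrightarrow> Lr + A + 1 \<noteq> 0 \<Longrightarrow> A + 1 \<noteq> 0 \<Longrightarrow>
       (2*A+2) * ((2*A+1) * f2a) * fL / ((A+1) * fa * ((Lr+A+1) * fLa)) = (f2a * fL * (2*(2*A+1))) / (fa * fLa * (Lr + A + 1))"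
      by (subst frac_eq_eq) (simp_all, algebra)
    have "real a + 1 \<noteq> 0" "real L + real a + 1 \<noteq> 0" by (simp_all add: add_nonneg_pos)
    from key[OF nz(1,2) this(2,1)] show ?thesis unfolding u_def by (simp add: add_ac)
  qed
  finally show ?thesis by (simp add: add_ac)
qed

lemma u_Suc_L: "u (Suc L) a = u L a * (real L + 1) / (real L + real a + 1)"
proof -
  have f1: "fact (Suc L + a) = (real L + real a + 1) * (fact (L+a) :: real)" by (simp add: add_ac)
  have f2: "fact (Suc L) = (real L + 1) * (fact L :: real)" by (simp add: add_ac)
  have key: "\<And>(A::real) Lr f2a fL fa fLa. fa \<noteq> 0 \<Longrightarrow> fLa \<noteq> 0 \<Longrightarrow> Lr + A + 1 \<noteq> 0 \<Longrightarrow>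
      f2a * ((Lr + 1) * fL) / (fa * ((Lr + A + 1) * fLa)) = f2a * fL / (fa * fLa) * (Lr + 1) / (Lr + A + 1)"
    by (simp add: field_simps)
  have "real L + real a + 1 \<noteq> 0" by (simp add: add_nonneg_pos)
  from key[OF _ _ this, of "fact a" "fact (L+a)" "fact (2*a)" "fact L"]
  show ?thesis unfolding u_def f1 f2 by simp
qed

lemma u_diag: "u L L = 1"
  by (simp add: u_def mult_2)

lemma u_zero: "u L 0 = 1"
  by (simp add: u_def)

definition G :: "nat \<Rightarrow> nat \<Rightarrow> real" where
  "G L a = (L+1) * (2 + (real L - 1) * a) * u L a"

lemma wz_abs:
  fixes A Lr x :: real
  assumes D: "Lr + A + 1 > 0"
  shows "3 * (Lr ^ 2 - 1) * (A * x) - 2 * (2 * Lr + 1) * (Lr - 2) * (A * (x * (Lr+1) / (Lr+A+1)))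
   = (Lr+1) * (2 + (Lr - 1) * (A+1)) * (x * (2 * (2*A+1)) / (Lr+A+1)) - (Lr+1) * (2 + (Lr - 1) * A) * x"
proof -
  have "Lr + A + 1 \<noteq> 0" using D by simp
  then show ?thesis
    by (simp add: divide_simps) (simp add: algebra_simps power2_eq_square)
qed

lemma wz: "3 * (real L ^ 2 - 1) * (a * u L a) - 2 * (2 * real L + 1) * (real L - 2) * (a * u (Suc L) a)
   = G L (Suc a) - G L a"
proof -
  have pos: "real L + real a + 1 > 0" by (simp add: add_nonneg_pos)
  have "G L (Suc a) - G L a = (real L+1) * (2 + (real L - 1) * (real a+1)) * (u L a * (2 * (2*real a+1)) / (real L+real a+1)) - (real L+1) * (2 + (real L - 1) * real a) * u L a"
    unfolding G_def u_Suc_a by simp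
  then show ?thesis
    unfolding u_Suc_L using wz_abs[OF pos, of "u L a"] by simp
qed

lemma rec:
  "2 * (2 * real L + 1) * (real L - 2) * Ssum (Suc L) = 3 * (real L ^ 2 - 1) * Ssum L + 2 * real L * (real L+1) * (real L - 2) - real L * (real L ^ 2 - 1)"
proof -
  have t: "(\<Sum>a<L. 3 * (real L ^ 2 - 1) * (a * u L a) - 2 * (2 * real L + 1) * (real L - 2) * (a * u (Suc L) a))
      = G L L - G L 0"
  proof -
    have "(\<Sum>a<L. 3 * (real L ^ 2 - 1) * (a * u L a) - 2 * (2 * real L + 1) * (real L - 2) * (a * u (Suc L) a))
      = (\<Sum>a<L. G L (Suc a) - G L a)" by (rule sum.cong[OF refl]) (rule wz)
    then show ?thesis using sum_lessThan_telescope[of "G L" L] by simp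
  qed
  have GL: "G L L - G L 0 = (real L+1) * (2 + (real L - 1) * real L) - 2 * (real L+1)"
    by (simp add: G_def u_diag u_zero)
  define P where "P = (\<Sum>a<L. a * u (Suc L) a)"
  have S1: "Ssum (Suc L) = P + real L * ((real L+1) / (2*real L+1))"
  proof -
    have "u (Suc L) L = (real L+1) / (real L + real L+1)" unfolding u_Suc_L u_diag by simp
    also have "real L + real L + 1 = 2 * real L + 1" by simp
    finally have "u (Suc L) L = (real L+1) / (2*real L+1)" .
    then show ?thesis by (simp add: Ssum_def P_def)
  qed
  have key: "3 * (real L ^ 2 - 1) * Ssum L - 2 * (2 * real L + 1) * (real L - 2) * P
     = (real L+1) * (2 + (real L - 1) * real L) - 2 * (real L+1)"
  proof -
    have a1: "(\<Sum>a<L. 3 * (real L ^ 2 - 1) * (a * u L a)) = 3 * (real L ^ 2 - 1) * Ssum L"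
      unfolding Ssum_def by (rule sum_distrib_left[symmetric])
    have a2: "(\<Sum>a<L. 2 * (2 * real L + 1) * (real L - 2) * (a * u (Suc L) a)) = 2 * (2 * real L + 1) * (real L - 2) * P"
      unfolding P_def by (rule sum_distrib_left[symmetric])
    show ?thesis using t GL unfolding sum_subtractf a1 a2 by simp
  qed
  have pos: "2 * real L + 1 \<noteq> 0" by (simp add: add_nonneg_pos)
  have e1: "2 * (2 * real L + 1) * (real L - 2) * Ssum (Suc L) = 2 * (2 * real L + 1) * (real L - 2) * P + 2 * real L * (real L + 1) * (real L - 2)"
  proof -
    have ab: "\<And>x::real. 2 * x + 1 \<noteq> 0 \<Longrightarrow> 2 * (2 * x + 1) * (x - 2) * (x * ((x+1) / (2*x+1))) = 2 * x * (x + 1) * (x - 2)"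
      by (simp add: field_simps)
    show ?thesis unfolding S1 by (simp only: distrib_left[of "2 * (2 * real L + 1) * (real L - 2)"] ab[OF pos])
  qed
  have e2: "(real L+1) * (2 + (real L - 1) * real L) - 2 * (real L+1) = real L * (real L ^ 2 - 1)"
    by (simp add: algebra_simps power2_eq_square)
  show ?thesis using e1 key e2 by linarith
qed

definition e :: "nat \<Rightarrow> real" where "e L = Ssum L - real L"

lemma e_rec:
  assumes "L \<ge> 3"
  shows "e (Suc L) = (3 * (real L ^ 2 - 1) * e L + 4 * (real L + 1)) / (2 * (2 * real L + 1) * (real L - 2))"
proof -
  have D: "2 * (2 * real L + 1) * (real L - 2) > 0" using assms by simp
  have "2 * (2 * real L + 1) * (real L - 2) * e (Suc L) = 3 * (real L ^ 2 - 1) * e L + 4 * (real L + 1)"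
    using rec[of L] unfolding e_def by (simp add: algebra_simps power2_eq_square)
  then show ?thesis using D by (simp add: field_simps)
qed

lemma e_bound:
  assumes "L \<ge> 7"
  shows "\<bar>e L\<bar> \<le> max 6 \<bar>e 7\<bar>"
  using assms
proof (induction L rule: nat_induct_at_least)
  case base then show ?case by simp
next
  case (Suc L)
  define M where "M = max 6 \<bar>e 7\<bar>"
  have M6: "M \<ge> 6" by (simp add: M_def)
  have IH: "\<bar>e L\<bar> \<le> M" using Suc.IH by (simp add: M_def)
  define D where "D = 2 * (2 * real L + 1) * (real L - 2)"
  have L7: "real L \<ge> 7" using Suc.hyps by simp
  have D: "D > 0" unfolding D_def using L7 by simp
  have sq: "real L ^ 2 \<ge> 7 * real L" unfolding power2_eq_square using L7 by (intro mult_right_mono) auto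
  have c: "3 * (real L ^ 2 - 1) \<ge> 0" using L7 sq by (smt (verit))
  have "\<bar>e (Suc L)\<bar> = \<bar>3 * (real L ^ 2 - 1) * e L + 4 * (real L + 1)\<bar> / D"
    using e_rec[of L] Suc.hyps D by (simp add: D_def abs_divide)
  also have "\<dots> \<le> (3 * (real L ^ 2 - 1) * M + 4 * (real L + 1)) / D"
  proof (rule divide_right_mono)
    have "\<bar>3 * (real L ^ 2 - 1) * e L\<bar> \<le> 3 * (real L ^ 2 - 1) * M"
      using c IH by (simp add: abs_mult mult_left_mono)
    then show "\<bar>3 * (real L ^ 2 - 1) * e L + 4 * (real L + 1)\<bar> \<le> 3 * (real L ^ 2 - 1) * M + 4 * (real L + 1)"
      by (smt (verit) of_nat_0_le_iff)
  qed (use D in simp)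
  also have "\<dots> \<le> M"
  proof -
    have q: "real L ^ 2 - 6 * real L - 1 \<ge> 6" using L7 sq by (smt (verit))
    have "4 * (real L + 1) \<le> 6 * (real L ^ 2 - 6 * real L - 1)"
      using L7 sq by (simp add: algebra_simps)
    also have "\<dots> \<le> M * (real L ^ 2 - 6 * real L - 1)"
      using M6 q by (intro mult_right_mono) auto
    finally have "3 * (real L ^ 2 - 1) * M + 4 * (real L + 1) \<le> D * M"
      unfolding D_def by (simp add: algebra_simps power2_eq_square)
    then show ?thesis using D by (simp add: divide_le_eq mult.commute)
  qed
  finally show ?case by (simp add: M_def)
qed

lemma Ssum_lim: "(\<lambda>L. Ssum L / real L) \<longlonglongrightarrow> 1"
proof -
  define M where "M = max 6 \<bar>e 7\<bar>"
  have ev: "eventually (\<lambda>L. \<bar>Ssum L / real L - 1\<bar> \<le> M / real L) sequentially"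
    using eventually_ge_at_top[of 7]
  proof eventually_elim
    case (elim L)
    then have L: "real L > 0" by simp
    have "Ssum L / real L - 1 = e L / real L" using L by (simp add: e_def field_simps)
    then show ?case using e_bound[OF elim] L by (simp add: abs_divide M_def divide_right_mono)
  qed
  show ?thesis
  proof (rule tendsto_sandwich[where f="\<lambda>L. 1 - M / real L" and h="\<lambda>L. 1 + M / real L"])
    show "eventually (\<lambda>L. 1 - M / real L \<le> Ssum L / real L) sequentially"
      using ev by eventually_elim linarith
    show "eventually (\<lambda>L. Ssum L / real L \<le> 1 + M / real L) sequentially"
      using ev by eventually_elim linarith
    show "(\<lambda>L. 1 - M / real L) \<longlonglongrightarrow> 1"
      using tendsto_diff[OF tendsto_const lim_const_over_n[of M]] by simp
    show "(\<lambda>L. 1 + M / real L) \<longlonglongrightarrow> 1"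
      using tendsto_add[OF tendsto_const lim_const_over_n[of M]] by simp
  qed
qed




lemma nv_meas:
  assumes xs: "xs \<in> tree_paths L" and k: "k \<le> L"
  shows "(\<lambda>w. node_value L w (take k xs)) \<in> borel_measurable (tree_space L)"
proof (cases "k = L")
  case True
  then have "(\<lambda>w. node_value L w (take k xs)) = (\<lambda>w. 1)"
    using xs by (auto simp: node_value_def tree_paths_def)
  then show ?thesis by simp
next
  case False
  then have kL: "k < L" using k by simp
  then have "(\<lambda>w. node_value L w (take k xs)) = (\<lambda>w. w (take k xs))"
    using xs by (auto simp: node_value_def tree_paths_def)
  moreover have "take k xs \<in> random_nodes L" by (rule paths_nodes[OF xs kL])
  ultimately show ?thesis by (simp add: tree_space_def)
qed

lemma pred_open:
  assumes xs: "xs \<in> tree_paths L"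
  shows "Measurable.pred (tree_space L) (\<lambda>w. open_path L w xs)"
proof -
  have "Measurable.pred (tree_space L) (\<lambda>w. \<forall>k\<in>{..<L}. node_value L w (take k xs) < node_value L w (take (Suc k) xs))"
  proof (rule pred_intros_finite(3))
    fix k assume "k \<in> {..<L}"
    then have k: "k \<le> L" "Suc k \<le> L" by auto
    show "Measurable.pred (tree_space L) (\<lambda>w. node_value L w (take k xs) < node_value L w (take (Suc k) xs))"
      unfolding pred_def using borel_measurable_less[OF nv_meas[OF xs k(1)] nv_meas[OF xs k(2)]] by simp
  qed simp
  moreover have "(\<lambda>w. open_path L w xs) = (\<lambda>w. \<forall>k\<in>{..<L}. node_value L w (take k xs) < node_value L w (take (Suc k) xs))"
    unfolding open_path_def by auto
  ultimately show ?thesis by simp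
qed

definition Ix :: "nat \<Rightarrow> nat list \<Rightarrow> (nat list \<Rightarrow> real) \<Rightarrow> real" where
  "Ix L xs w = indicator {w. open_path L w xs} w"

lemma Ix_meas: "xs \<in> tree_paths L \<Longrightarrow> Ix L xs \<in> borel_measurable (tree_space L)"
  unfolding Ix_def using pred_open[of xs L] by (simp add: indicator_def)

lemma TS_prob: "prob_space (tree_space L)"
  unfolding tree_space_def by (rule PM_prob)

lemma Ix_bound: "\<bar>Ix L xs w\<bar> \<le> 1" "Ix L xs w \<ge> 0" "Ix L xs w * Ix L xs w = Ix L xs w"
  by (auto simp: Ix_def indicator_def)

lemma int_pair:
  assumes xs: "xs \<in> tree_paths L" and ys: "ys \<in> tree_paths L" and L: "1 \<le> L"
  shows "integrable (tree_space L) (\<lambda>w. Ix L xs w * Ix L ys w)"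
    and "(\<integral>w. Ix L xs w * Ix L ys w \<partial>tree_space L) = pp L (lcp xs ys)"
proof -
  interpret P: prob_space "tree_space L" by (rule TS_prob)
  have m: "(\<lambda>w. Ix L xs w * Ix L ys w) \<in> borel_measurable (tree_space L)"
    using Ix_meas[OF xs] Ix_meas[OF ys] by measurable
  show "integrable (tree_space L) (\<lambda>w. Ix L xs w * Ix L ys w)"
    by (rule P.integrable_const_bound[where B=1]) (use m in \<open>auto simp: Ix_def indicator_def\<close>)
  have pp0: "pp L (lcp xs ys) \<ge> 0" by (simp add: pp_def)
  have "(\<integral>w. Ix L xs w * Ix L ys w \<partial>tree_space L) = enn2real (\<integral>\<^sup>+w. ennreal (Ix L xs w * Ix L ys w) \<partial>tree_space L)"
    by (rule integral_eq_nn_integral[OF m]) (auto simp: Ix_def)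
  also have "(\<lambda>w. ennreal (Ix L xs w * Ix L ys w)) = (\<lambda>w. indicator {w. open_path L w xs} w * indicator {w. open_path L w ys} w)"
    by (auto simp: Ix_def indicator_def)
  also have "enn2real (\<integral>\<^sup>+w. indicator {w. open_path L w xs} w * indicator {w. open_path L w ys} w \<partial>tree_space L) = pp L (lcp xs ys)"
    unfolding pair_paths[OF xs ys L] using pp0 by simp
  finally show "(\<integral>w. Ix L xs w * Ix L ys w \<partial>tree_space L) = pp L (lcp xs ys)" .
qed

lemma Theta_sum: "Theta L w = (\<Sum>xs\<in>tree_paths L. Ix L xs w)"
proof -
  have fin: "finite (tree_paths L)" using paths_fin_card by auto
  have "real (card {xs \<in> tree_paths L. open_path L w xs}) = (\<Sum>xs\<in>{xs \<in> tree_paths L. open_path L w xs}. 1)"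
    by simp
  also have "\<dots> = (\<Sum>xs\<in>tree_paths L. if open_path L w xs then 1 else 0)"
    by (rule sum.inter_filter[OF fin])
  finally show ?thesis unfolding Theta_def Ix_def by (simp add: indicator_def of_bool_def)
qed

lemma pp_diag: "pp L L = 1 / fact L"
  by (simp add: pp_def)

lemma sum_pp: "(\<Sum>m<L. fact L * real (L-m-1) * fact (L-m-1) * pp L m) = Ssum L"
proof -
  have "(\<Sum>m<L. fact L * real (L-m-1) * fact (L-m-1) * pp L m)
      = (\<Sum>m<L. (\<lambda>a. fact L * real a * fact a * (fact (2*a) / (fact a ^ 2 * fact (L + a)))) (L - Suc m))"
    by (rule sum.cong) (auto simp: pp_def)
  also have "\<dots> = (\<Sum>a<L. fact L * real a * fact a * (fact (2*a) / (fact a ^ 2 * fact (L + a))))"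
    by (rule sum.nat_diff_reindex)
  also have "\<dots> = Ssum L"
    unfolding Ssum_def u_def by (rule sum.cong) (auto simp: power2_eq_square)
  finally show ?thesis .
qed

lemma E_Theta:
  assumes L: "1 \<le> L"
  shows "integrable (tree_space L) (Theta L)" "(\<integral>w. Theta L w \<partial>tree_space L) = 1"
proof -
  have int1: "integrable (tree_space L) (Ix L xs)" if "xs \<in> tree_paths L" for xs
    using int_pair(1)[OF that that L] by (simp add: Ix_bound)
  have Th: "Theta L = (\<lambda>w. \<Sum>xs\<in>tree_paths L. Ix L xs w)" using Theta_sum by auto
  show "integrable (tree_space L) (Theta L)" unfolding Th using int1 by auto
  have "(\<integral>w. Theta L w \<partial>tree_space L) = (\<Sum>xs\<in>tree_paths L. \<integral>w. Ix L xs w \<partial>tree_space L)"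
    unfolding Th using int1 by (simp add: integral_sum')
  also have "\<dots> = (\<Sum>xs\<in>tree_paths L. 1 / fact L)"
  proof (rule sum.cong[OF refl])
    fix xs assume xs: "xs \<in> tree_paths L"
    have "(\<integral>w. Ix L xs w \<partial>tree_space L) = (\<integral>w. Ix L xs w * Ix L xs w \<partial>tree_space L)"
      by (simp add: Ix_bound)
    also have "\<dots> = 1 / fact L" using int_pair(2)[OF xs xs L] xs
      by (simp add: lcp_self pp_diag tree_paths_def)
    finally show "(\<integral>w. Ix L xs w \<partial>tree_space L) = 1 / fact L" .
  qed
  also have "\<dots> = 1" using paths_fin_card[of L] by simp
  finally show "(\<integral>w. Theta L w \<partial>tree_space L) = 1" .
qed

lemma E_Theta2:
  assumes L: "1 \<le> L"
  shows "integrable (tree_space L) (\<lambda>w. (Theta L w)\<^sup>2)" "(\<integral>w. (Theta L w)\<^sup>2 \<partial>tree_space L) = Ssum L + 1"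
proof -
  have Th: "(\<lambda>w. (Theta L w)\<^sup>2) = (\<lambda>w. \<Sum>xs\<in>tree_paths L. \<Sum>ys\<in>tree_paths L. Ix L xs w * Ix L ys w)"
    by (auto simp: Theta_sum power2_eq_square sum_product)
  have int2: "integrable (tree_space L) (\<lambda>w. \<Sum>ys\<in>tree_paths L. Ix L xs w * Ix L ys w)" if "xs \<in> tree_paths L" for xs
    using int_pair(1)[OF that _ L] by auto
  show "integrable (tree_space L) (\<lambda>w. (Theta L w)\<^sup>2)" unfolding Th using int2 by auto
  have "(\<integral>w. (Theta L w)\<^sup>2 \<partial>tree_space L) = (\<Sum>xs\<in>tree_paths L. \<integral>w. (\<Sum>ys\<in>tree_paths L. Ix L xs w * Ix L ys w) \<partial>tree_space L)"
    unfolding Th using int2 by (simp add: integral_sum' del: integral_mult_right integral_mult_left)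
  also have "\<dots> = (\<Sum>xs\<in>tree_paths L. \<Sum>ys\<in>tree_paths L. pp L (lcp xs ys))"
  proof (rule sum.cong[OF refl])
    fix xs assume xs: "xs \<in> tree_paths L"
    show "(\<integral>w. (\<Sum>ys\<in>tree_paths L. Ix L xs w * Ix L ys w) \<partial>tree_space L) = (\<Sum>ys\<in>tree_paths L. pp L (lcp xs ys))"
      using int_pair[OF xs _ L] by (simp add: integral_sum' del: integral_mult_right integral_mult_left)
  qed
  also have "\<dots> = Ssum L + 1"
    unfolding pair_sum sum_pp by (simp add: pp_diag)
  finally show "(\<integral>w. (Theta L w)\<^sup>2 \<partial>tree_space L) = Ssum L + 1" .
qed

lemma Var_eq:
  assumes L: "1 \<le> L"
  shows "Var_star L = Ssum L"
proof -
  interpret P: prob_space "tree_space L" by (rule TS_prob)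
  note i1 = E_Theta[OF L] and i2 = E_Theta2[OF L]
  have e: "(\<lambda>w. (Theta L w - 1)\<^sup>2) = (\<lambda>w. (Theta L w)\<^sup>2 - 2 * Theta L w + 1)"
    by (auto simp: power2_eq_square algebra_simps)
  have "Var_star L = (\<integral>w. (Theta L w)\<^sup>2 - 2 * Theta L w + 1 \<partial>tree_space L)"
    unfolding Var_star_def i1(2) e ..
  also have "\<dots> = (\<integral>w. (Theta L w)\<^sup>2 \<partial>tree_space L) - 2 * (\<integral>w. Theta L w \<partial>tree_space L) + 1"
    using i1(1) i2(1) by (simp add: integral_add integral_diff P.prob_space)
  also have "\<dots> = Ssum L" using i1(2) i2(2) by simp
  finally show ?thesis .
qed

theorem mainTheorem5:
  shows "(\<forall>L\<ge>1. (\<integral>\<omega>. Theta L \<omega> \<partial>tree_space L) = 1) \<and>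
         (\<lambda>L. Var_star L / real L) \<longlonglongrightarrow> 1"
proof
  show "\<forall>L\<ge>1. (\<integral>\<omega>. Theta L \<omega> \<partial>tree_space L) = 1" using E_Theta(2) by auto
  have "eventually (\<lambda>L. Ssum L / real L = Var_star L / real L) sequentially"
    using eventually_ge_at_top[of 1] by eventually_elim (simp add: Var_eq)
  then show "(\<lambda>L. Var_star L / real L) \<longlonglongrightarrow> 1"
    by (rule Lim_transform_eventually[OF Ssum_lim])
qed


end
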